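(* Let $B\subseteq\widetilde\Sigma^*\setminus\mathring\Sigma^+$ be a base in decomposed form with scaffold $sc$ and fill $fl$. Then $\mathcal{C}(B)=\big(sc\cup(sc\,@\,fl^@)\big)\cap\Sigma^*$.
   Context: $\Sigma$ is a finite alphabet, $\mathring\Sigma=\{\mathring a\mid a\in\Sigma\}$ a disjoint ("dotted") copy, and $\widetilde\Sigma=\Sigma\cup\mathring\Sigma$. The match operation $@$ on letters is: $a@\mathring a=\mathring a@a=a$, $\mathring a@\mathring a=\mathring a$ for $a\in\Sigma$, undefined otherwise. For words $w,w'\in\widetilde\Sigma^n$, $w@w'=(w(1)@w'(1))\cdots(w(n)@w'(n))$ if every letterwise match is defined ($\epsilon@\epsilon=\epsilon$); otherwise (including unequal lengths) undefined. For languages, $B'@B''=\{w'@w''\mid w'\in B',w''\in B'', w'@w''\text{ defined}\}$. Define $B^{0@}=B$, $B^{i@}=B^{(i-1)@}@B$ for $i>0$, and $B^@=\bigcup_{i\ge0}B^{i@}$. The consensual language with base $B$ is $\mathcal{C}(B)=B^@\cap\Sigma^*$. A language $B$ is unproductive if $\mathcal{C}(B)=\emptyset$; a pair $(B,B')$ is unmatchable if $B@B'=\emptyset$. A base $B\subseteq\widetilde\Sigma^*\setminus\mathring\Sigma^+$ is in decomposed form with scaffold $sc$ and fill $fl$ if $B$ is the disjoint union of $sc$ and $fl$, $fl$ is unproductive, and the pair $(sc,sc)$ is unmatchable. *)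

theory Defs
  imports Main
begin

datatype 'a xletter = Plain 'a | Dotted 'a

fun lmatch :: "'a xletter \<Rightarrow> 'a xletter \<Rightarrow> 'a xletter option" where
  "lmatch (Plain a) (Dotted b) = (if a = b then Some (Plain a) else None)"
| "lmatch (Dotted a) (Plain b) = (if a = b then Some (Plain a) else None)"
| "lmatch (Dotted a) (Dotted b) = (if a = b then Some (Dotted a) else None)"
| "lmatch (Plain a) (Plain b) = None"

fun wmatch :: "'a xletter list \<Rightarrow> 'a xletter list \<Rightarrow> 'a xletter list option" where
  "wmatch [] [] = Some []"
| "wmatch (x # xs) (y # ys) =
     (case lmatch x y of
        None \<Rightarrow> None
      | Some z \<Rightarrow> (case wmatch xs ys of None \<Rightarrow> None | Some zs \<Rightarrow> Some (z # zs)))"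
| "wmatch _ _ = None"

definition lang_match :: "'a xletter list set \<Rightarrow> 'a xletter list set \<Rightarrow> 'a xletter list set" where
  "lang_match B1 B2 = {w. \<exists>w1\<in>B1. \<exists>w2\<in>B2. wmatch w1 w2 = Some w}"

fun match_pow :: "'a xletter list set \<Rightarrow> nat \<Rightarrow> 'a xletter list set" where
  "match_pow B 0 = B"
| "match_pow B (Suc i) = lang_match (match_pow B i) B"

definition match_star :: "'a xletter list set \<Rightarrow> 'a xletter list set" where
  "match_star B = (\<Union>i. match_pow B i)"

text \<open>Sigma^* embedded: words consisting of plain letters only.\<close>
definition plain_words :: "'a xletter list set" where
  "plain_words = {w. \<forall>x\<in>set w. \<exists>a. x = Plain a}"

text \<open>Dotted Sigma^+: nonempty words of dotted letters only.\<close>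
definition dotted_plus :: "'a xletter list set" where
  "dotted_plus = {w. w \<noteq> [] \<and> (\<forall>x\<in>set w. \<exists>a. x = Dotted a)}"

definition consensual :: "'a xletter list set \<Rightarrow> 'a xletter list set" where
  "consensual B = match_star B \<inter> plain_words"

definition unproductive :: "'a xletter list set \<Rightarrow> bool" where
  "unproductive B \<longleftrightarrow> consensual B = {}"

definition unmatchable :: "'a xletter list set \<Rightarrow> 'a xletter list set \<Rightarrow> bool" where
  "unmatchable B1 B2 \<longleftrightarrow> lang_match B1 B2 = {}"

definition decomposed_form ::
  "'a xletter list set \<Rightarrow> 'a xletter list set \<Rightarrow> 'a xletter list set \<Rightarrow> bool" where
  "decomposed_form B sc fl \<longleftrightarrow>
     B \<inter> dotted_plus = {} \<and> B = sc \<union> fl \<and> sc \<inter> fl = {} \<and>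
     unproductive fl \<and> unmatchable sc sc"

end

theory Submission
  imports Defs
begin

lemma lmatch_comm: "lmatch x y = lmatch y x"
  by (cases x; cases y) auto

lemma wmatch_comm: "wmatch xs ys = wmatch ys xs"
proof (induction xs arbitrary: ys)
  case Nil then show ?case by (cases ys) auto
next
  case (Cons x xs)
  show ?case
  proof (cases ys)
    case (Cons y ys')
    have "wmatch xs ys' = wmatch ys' xs" by (rule Cons.IH)
    then show ?thesis using Cons by (simp add: lmatch_comm[of x y] split: option.split)
  qed simp
qed

lemma lmatch_assoc:
  "lmatch x y = Some z \<Longrightarrow> lmatch z w = Some u \<Longrightarrow> \<exists>v. lmatch y w = Some v \<and> lmatch x v = Some u"
  by (cases x; cases y; cases w; auto split: if_splits)

lemma wmatch_assoc:
  "wmatch a b = Some c \<Longrightarrow> wmatch c d = Some e \<Longrightarrow> \<exists>y. wmatch b d = Some y \<and> wmatch a y = Some e"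
proof (induction a arbitrary: b c d e)
  case Nil then show ?case
    by (cases b; cases d; auto)
next
  case (Cons x xs)
  from Cons.prems obtain y ys where b: "b = y # ys" by (cases b) auto
  from Cons.prems b obtain z zs where z: "lmatch x y = Some z" and zs: "wmatch xs ys = Some zs"
    and c: "c = z # zs" by (auto split: option.splits)
  from Cons.prems c obtain w ws where d: "d = w # ws" by (cases d) auto
  from Cons.prems c d obtain u us where u: "lmatch z w = Some u" and us: "wmatch zs ws = Some us"
    and e: "e = u # us" by (auto split: option.splits)
  from lmatch_assoc[OF z u] obtain v where v1: "lmatch y w = Some v" and v2: "lmatch x v = Some u" by blast
  from Cons.IH[OF zs us] obtain vs where v3: "wmatch ys ws = Some vs" and v4: "wmatch xs vs = Some us" by blast
  show ?case using v1 v2 v3 v4 b d e by (intro exI[of _ "v # vs"]) auto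
qed

lemma wmatch_sub:
  "wmatch a b = Some c \<Longrightarrow> wmatch c d = Some e \<Longrightarrow> \<exists>x. wmatch a d = Some x"
  using wmatch_assoc[of b a c d e] wmatch_comm by metis

lemma wmatch_assoc2:
  "wmatch b d = Some y \<Longrightarrow> wmatch a y = Some e \<Longrightarrow> \<exists>c. wmatch a b = Some c \<and> wmatch c d = Some e"
proof -
  assume h1: "wmatch b d = Some y" and h2: "wmatch a y = Some e"
  have "wmatch d b = Some y" using h1 wmatch_comm by metis
  moreover have "wmatch y a = Some e" using h2 wmatch_comm by metis
  ultimately obtain y' where "wmatch b a = Some y'" "wmatch d y' = Some e"
    using wmatch_assoc by metis
  then show ?thesis using wmatch_comm by metis
qed

lemma star_step: "f \<in> match_star fl \<Longrightarrow> b \<in> fl \<Longrightarrow> wmatch f b = Some w \<Longrightarrow> w \<in> match_star fl"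
  unfolding match_star_def
proof -
  assume "f \<in> (\<Union>i. match_pow fl i)" "b \<in> fl" "wmatch f b = Some w"
  then obtain j where "f \<in> match_pow fl j" by blast
  then have "w \<in> match_pow fl (Suc j)" using \<open>b \<in> fl\<close> \<open>wmatch f b = Some w\<close>
    by (auto simp: lang_match_def)
  then show "w \<in> (\<Union>i. match_pow fl i)" by blast
qed

lemma fl_star: "b \<in> fl \<Longrightarrow> b \<in> match_star fl"
  unfolding match_star_def using match_pow.simps(1)[of fl] by blast

lemma upper:
  assumes um: "unmatchable sc sc" and Bd: "B = sc \<union> fl"
  shows "match_pow B i \<subseteq> sc \<union> match_star fl \<union> lang_match sc (match_star fl)"
proof (induction i)
  case 0 then show ?case using Bd fl_star by auto
next
  case (Suc i)
  have nm: "\<And>s s' w. s \<in> sc \<Longrightarrow> s' \<in> sc \<Longrightarrow> wmatch s s' \<noteq> Some w"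
    using um unfolding unmatchable_def lang_match_def by blast
  show ?case
  proof
    fix w assume "w \<in> match_pow B (Suc i)"
    then obtain x b where x: "x \<in> match_pow B i" and b: "b \<in> B" and xb: "wmatch x b = Some w"
      by (auto simp: lang_match_def)
    from x Suc.IH have "x \<in> sc \<or> x \<in> match_star fl \<or> x \<in> lang_match sc (match_star fl)" by blast
    moreover from b Bd have "b \<in> sc \<or> b \<in> fl" by blast
    ultimately show "w \<in> sc \<union> match_star fl \<union> lang_match sc (match_star fl)"
    proof (elim disjE)
      assume "x \<in> sc" "b \<in> sc" then show ?thesis using nm xb by blast
    next
      assume "x \<in> sc" "b \<in> fl" then show ?thesis using xb fl_star by (auto simp: lang_match_def)
    next
      assume "x \<in> match_star fl" "b \<in> sc"
      then show ?thesis using xb wmatch_comm[of x b] by (auto simp: lang_match_def)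
    next
      assume "x \<in> match_star fl" "b \<in> fl" then show ?thesis using xb star_step by blast
    next
      assume "x \<in> lang_match sc (match_star fl)" "b \<in> sc"
      then obtain s f where "s \<in> sc" "f \<in> match_star fl" "wmatch s f = Some x"
        by (auto simp: lang_match_def)
      then show ?thesis using wmatch_sub[of s f x b w] xb nm \<open>b \<in> sc\<close> by blast
    next
      assume "x \<in> lang_match sc (match_star fl)" "b \<in> fl"
      then obtain s f where s: "s \<in> sc" and f: "f \<in> match_star fl" and sf: "wmatch s f = Some x"
        by (auto simp: lang_match_def)
      from wmatch_assoc[OF sf xb] obtain y where "wmatch f b = Some y" "wmatch s y = Some w" by blast
      then show ?thesis using star_step[OF f \<open>b \<in> fl\<close>] s by (auto simp: lang_match_def)
    qed
  qed
qed

lemma lower: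
  assumes Bd: "B = sc \<union> fl" and s: "s \<in> sc" and f: "f \<in> match_pow fl j" and sf: "wmatch s f = Some w"
  shows "w \<in> match_pow B (Suc j)"
  using f sf
proof (induction j arbitrary: f w)
  case 0 then show ?case using s Bd by (auto simp: lang_match_def)
next
  case (Suc j)
  then obtain f' b where f': "f' \<in> match_pow fl j" and b: "b \<in> fl" and fb: "wmatch f' b = Some f"
    by (auto simp: lang_match_def)
  from wmatch_assoc2[OF fb Suc.prems(2)] obtain c where c1: "wmatch s f' = Some c" and c2: "wmatch c b = Some w"
    by blast
  from Suc.IH[OF f' c1] have "c \<in> match_pow B (Suc j)" .
  then show ?case using c2 b Bd by (auto simp: lang_match_def)
qed

theorem lemma1:
  fixes B sc fl :: "'a xletter list set"
  assumes "decomposed_form B sc fl"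
  shows "consensual B = (sc \<union> lang_match sc (match_star fl)) \<inter> plain_words"
proof -
  from assms have Bd: "B = sc \<union> fl" and up: "unproductive fl" and um: "unmatchable sc sc"
    unfolding decomposed_form_def by auto
  have e: "match_star fl \<inter> plain_words = {}" using up unfolding unproductive_def consensual_def .
  show ?thesis
  proof
    show "consensual B \<subseteq> (sc \<union> lang_match sc (match_star fl)) \<inter> plain_words"
      using upper[OF um Bd] e unfolding consensual_def match_star_def[of B] by blast
  next
    have "sc \<subseteq> match_star B" using Bd unfolding match_star_def
      using match_pow.simps(1)[of B] by blast
    moreover have "lang_match sc (match_star fl) \<subseteq> match_star B"
    proof
      fix w assume "w \<in> lang_match sc (match_star fl)"
      then obtain s f j where "s \<in> sc" "f \<in> match_pow fl j" "wmatch s f = Some w"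
        by (auto simp: lang_match_def match_star_def)
      from lower[OF Bd this] show "w \<in> match_star B" unfolding match_star_def by blast
    qed
    ultimately show "(sc \<union> lang_match sc (match_star fl)) \<inter> plain_words \<subseteq> consensual B"
      unfolding consensual_def by blast
  qed
qed

end
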